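(* Let $N$ be a positive integer, $R\in\{0,\dots,N\}$, $n\in\{1,\dots,N\}$, and $r\in\{0,\dots,n\}$ with $R+n-N\le r\le R$. Let $\mathscr{A}=\{\vartheta\in\mathbb{Z}^+:r\le\vartheta\le R\}$, $\mathscr{B}=\{\vartheta\in\mathbb{Z}^+:R\le\vartheta\le r+N-n\}$, and $\widehat R=\min\{N,\lfloor(N+1)\frac rn\rfloor\}$. Then $\widehat R\in\mathscr{A}$ provided $\frac rn\le\frac RN$, and $\widehat R\in\mathscr{B}$ provided $\frac rn\ge\frac RN$.
   Context: $\mathbb{Z}^+$ denotes the set of nonnegative integers. *)

theory Defs
  imports Complex_Main
begin

definition Rhat :: "nat \<Rightarrow> nat \<Rightarrow> nat \<Rightarrow> nat" where
  "Rhat N n r = min N (nat \<lfloor>real (N + 1) * (real r / real n)\<rfloor>)"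

end

theory Submission
  imports Defs
begin

theorem lemma7:
  fixes N R n r :: nat
  assumes "N \<ge> 1" and "R \<le> N" and "1 \<le> n" and "n \<le> N" and "r \<le> n"
    and "int R + int n - int N \<le> int r" and "r \<le> R"
  shows "(real r / real n \<le> real R / real N \<longrightarrow> Rhat N n r \<in> {\<theta>::nat. r \<le> \<theta> \<and> \<theta> \<le> R})
    \<and> (real r / real n \<ge> real R / real N \<longrightarrow> Rhat N n r \<in> {\<theta>::nat. R \<le> \<theta> \<and> int \<theta> \<le> int r + int N - int n})"
proof -
  define x where "x = real (N + 1) * (real r / real n)"
  have np: "real n > 0" "real N > 0" using assms by auto
  have xe: "x = real ((N+1)*r) / real n" unfolding x_def by (simp add: algebra_simps)
  have Rh: "Rhat N n r = min N (nat \<lfloor>x\<rfloor>)" unfolding Rhat_def x_def ..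
  have geq: "real k \<le> x \<Longrightarrow> k \<le> nat \<lfloor>x\<rfloor>" for k
    by (metis le_nat_floor)
  have ltq: "x < real k + 1 \<Longrightarrow> nat \<lfloor>x\<rfloor> \<le> k" for k
    by (metis floor_less_iff le_nat_iff less_eq_real_def nat_int of_int_of_nat_eq of_nat_0_le_iff
        zle_add1_eq_le not_less floor_le_iff nat_le_iff)
  have rx: "real r \<le> x"
  proof -
    have "r * n \<le> (N+1)*r" using assms mult_le_mono1[of n "N+1" r] by (simp add: mult.commute)
    hence "real r * real n \<le> real ((N+1)*r)" by (metis of_nat_le_iff of_nat_mult)
    thus ?thesis using np xe by (simp add: pos_le_divide_eq)
  qed
  have R1: "Rhat N n r \<ge> r" unfolding Rh using geq[OF rx] assms by auto
  have up2: "Rhat N n r \<le> r + N - n"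
  proof (cases "r = n")
    case True thus ?thesis unfolding Rhat_def by auto
  next
    case False
    hence "r < n" using assms by auto
    hence "r * (N+1-n) < n * (N+1-n)" using assms by auto
    hence "(N+1)*r < n*(r + N - n + 1)" using assms
      by (simp add: algebra_simps diff_mult_distrib diff_mult_distrib2)
    hence "real ((N+1)*r) < real (n*(r + N - n + 1))"
      by (simp only: of_nat_less_iff)
    hence "real ((N+1)*r) < real n * (real (r + N - n) + 1)"
      by (simp only: of_nat_mult of_nat_add of_nat_1)
    hence "x < real (r + N - n) + 1" using np xe by (simp add: divide_less_eq mult.commute)
    thus ?thesis using ltq unfolding Rh by fastforce
  qed
  show ?thesis
  proof (intro conjI impI)
    assume h: "real r / real n \<le> real R / real N"
    hence "real r * real N \<le> real R * real n" using np by (simp add: divide_simps)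
    hence c: "r * N \<le> R * n" by (metis of_nat_le_iff of_nat_mult)
    have "Rhat N n r \<le> R"
    proof (cases "R = N")
      case True thus ?thesis unfolding Rhat_def by auto
    next
      case False
      hence "R < N" using assms by auto
      have "N*((N+1)*r) \<le> (N+1)*(R*n)" using c by (metis mult.assoc mult.commute mult_le_mono2)
      also have "\<dots> < N*((R+1)*n)" using \<open>R < N\<close> assms by (simp add: algebra_simps)
      finally have "(N+1)*r < (R+1)*n" by simp
      hence "real ((N+1)*r) < real ((R+1)*n)"
        by (simp only: of_nat_less_iff)
      hence "real ((N+1)*r) < real n * (real R + 1)"
        by (simp only: of_nat_mult of_nat_add of_nat_1 mult.commute)
      hence "x < real R + 1" using np xe by (simp add: divide_less_eq mult.commute)
      thus ?thesis using ltq unfolding Rh by fastforce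
    qed
    thus "Rhat N n r \<in> {\<theta>. r \<le> \<theta> \<and> \<theta> \<le> R}" using R1 by auto
  next
    assume h: "real R / real N \<le> real r / real n"
    hence "real R * real n \<le> real r * real N" using np by (simp add: divide_simps)
    hence c: "R * n \<le> r * N" by (metis of_nat_le_iff of_nat_mult)
    have "R*n \<le> (N+1)*r" using c by (simp add: algebra_simps)
    hence "real R * real n \<le> real ((N+1)*r)" by (metis of_nat_le_iff of_nat_mult)
    hence "real R \<le> x" using np xe by (simp add: pos_le_divide_eq)
    hence "R \<le> Rhat N n r" unfolding Rh using geq assms by auto
    moreover have "int (Rhat N n r) \<le> int r + int N - int n" using up2 assms by linarith
    ultimately show "Rhat N n r \<in> {\<theta>. R \<le> \<theta> \<and> int \<theta> \<le> int r + int N - int n}" by auto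
  qed
qed

end
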